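(* Let $f:\{-1,1\}^k\to\{0,1\}$ and $\delta\in(0,1)$. There exists a vanishing probability measure on $\mathcal{C}_\delta(f)$ if and only if there exists a vanishing probability measure on $\mathcal{C}(f)$.
   Context: $\mathcal{C}(f)$ is the set of symmetric $(k+1)\times(k+1)$ moment matrices $\zeta(\nu)$ (indices $0..k$: $\zeta(i,i)=1$, $\zeta(0,i)=\mathbb{E}_\nu x_i$, $\zeta(i,j)=\mathbb{E}_\nu x_ix_j$ for $i\neq j$) over distributions $\nu$ on $f^{-1}(1)$; $\mathcal{C}_\delta(f)=\{(1-\delta)\zeta+\delta I_{k+1}:\zeta\in\mathcal{C}(f)\}$. For $S\subseteq[k]$, a permutation $\pi$ of $S$, and $b\in\{-1,1\}^{|S|}$, $\zeta_{S,\pi,b}$ is the submatrix of $\zeta$ on rows/columns $\{0\}\cup S$ with the $S$-coordinates permuted by $\pi$, multiplied entrywise by $(1\ b)(1\ b)^T$; for a measure $\Lambda$, $\Lambda_{S,\pi,b}$ is the law of $\zeta_{S,\pi,b}$, $\zeta\sim\Lambda$. With $\hat f(S)$ the Fourier coefficients of $f$, a probability measure $\Lambda$ (on either body) is vanishing if for every $t\in[k]$ the signed measure $\mathbb{E}_{|S|=t}\mathbb{E}_{\pi}\mathbb{E}_{b}[(\prod_{i\in S}b_i)\hat f(S)\Lambda_{S,\pi,b}]$ ($S,\pi,b$ uniform) is identically zero. *)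

theory Defs
  imports "HOL-Probability.Probability"
begin

definition cube :: "nat \<Rightarrow> (nat \<Rightarrow> real) set" where
  "cube k = {x. (\<forall>i\<in>{1..k}. x i \<in> {-1, 1}) \<and> (\<forall>i. i \<notin> {1..k} \<longrightarrow> x i = 0)}"

definition fhat :: "nat \<Rightarrow> ((nat \<Rightarrow> real) \<Rightarrow> real) \<Rightarrow> nat set \<Rightarrow> real" where
  "fhat k f S = (\<Sum>x\<in>cube k. f x * (\<Prod>i\<in>S. x i)) / 2 ^ k"

text \<open>Matrices of size n (indices 0..n-1) are extensional functions on index pairs.\<close>
definition mat_space :: "nat \<Rightarrow> (nat \<times> nat \<Rightarrow> real) measure" where
  "mat_space n = PiM ({..<n} \<times> {..<n}) (\<lambda>_. borel)"

definition moment_matrix :: "nat \<Rightarrow> (nat \<Rightarrow> real) pmf \<Rightarrow> (nat \<times> nat \<Rightarrow> real)" where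
  "moment_matrix k \<nu> = restrict (\<lambda>(i, j).
      if i = j then 1
      else if i = 0 then measure_pmf.expectation \<nu> (\<lambda>x. x j)
      else if j = 0 then measure_pmf.expectation \<nu> (\<lambda>x. x i)
      else measure_pmf.expectation \<nu> (\<lambda>x. x i * x j)) ({..<Suc k} \<times> {..<Suc k})"

definition Cbody :: "nat \<Rightarrow> ((nat \<Rightarrow> real) \<Rightarrow> real) \<Rightarrow> (nat \<times> nat \<Rightarrow> real) set" where
  "Cbody k f = {moment_matrix k \<nu> | \<nu>. set_pmf \<nu> \<subseteq> {x \<in> cube k. f x = 1}}"

definition Cdelta :: "nat \<Rightarrow> ((nat \<Rightarrow> real) \<Rightarrow> real) \<Rightarrow> real \<Rightarrow> (nat \<times> nat \<Rightarrow> real) set" where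
  "Cdelta k f \<delta> = {restrict (\<lambda>(i, j). (1 - \<delta>) * \<zeta> (i, j) + \<delta> * (if i = j then 1 else 0))
                       ({..<Suc k} \<times> {..<Suc k}) | \<zeta>. \<zeta> \<in> Cbody k f}"

text \<open>Orderings of S: bijections from positions 1..|S| onto S (the permutation pi of S).\<close>
definition perms_of :: "nat set \<Rightarrow> (nat \<Rightarrow> nat) set" where
  "perms_of S = {\<pi>. bij_betw \<pi> {1..card S} S \<and> (\<forall>i. i \<notin> {1..card S} \<longrightarrow> \<pi> i = 0)}"

definition signs :: "nat \<Rightarrow> (nat \<Rightarrow> real) set" where
  "signs t = {b. (\<forall>i\<in>{1..t}. b i \<in> {-1, 1}) \<and> (\<forall>i. i \<notin> {1..t} \<longrightarrow> b i = 0)}"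

definition submat :: "(nat \<times> nat \<Rightarrow> real) \<Rightarrow> nat set \<Rightarrow> (nat \<Rightarrow> nat) \<Rightarrow> (nat \<Rightarrow> real)
    \<Rightarrow> (nat \<times> nat \<Rightarrow> real)" where
  "submat \<zeta> S \<pi> b = restrict (\<lambda>(i, j).
      \<zeta> (if i = 0 then 0 else \<pi> i, if j = 0 then 0 else \<pi> j)
        * (if i = 0 then 1 else b i) * (if j = 0 then 1 else b j))
      ({..<Suc (card S)} \<times> {..<Suc (card S)})"

definition prob_on :: "nat \<Rightarrow> (nat \<times> nat \<Rightarrow> real) measure \<Rightarrow> (nat \<times> nat \<Rightarrow> real) set \<Rightarrow> bool" where
  "prob_on k \<Lambda> B \<longleftrightarrow> prob_space \<Lambda> \<and> sets \<Lambda> = sets (restrict_space (mat_space (Suc k)) B)"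

text \<open>Vanishing: for every t in [k], the signed measure
  E_{|S|=t} E_pi E_b [(prod b_i) fhat(S) Lambda_{S,pi,b}] is zero on every measurable set.\<close>
definition vanishing :: "nat \<Rightarrow> ((nat \<Rightarrow> real) \<Rightarrow> real) \<Rightarrow> (nat \<times> nat \<Rightarrow> real) measure \<Rightarrow> bool" where
  "vanishing k f \<Lambda> \<longleftrightarrow>
     (\<forall>t\<in>{1..k}. \<forall>A\<in>sets (mat_space (Suc t)).
        (\<Sum>S\<in>{S. S \<subseteq> {1..k} \<and> card S = t}. \<Sum>\<pi>\<in>perms_of S. \<Sum>b\<in>signs t.
            (\<Prod>i\<in>{1..t}. b i) * fhat k f S
              * measure \<Lambda> {\<zeta> \<in> space \<Lambda>. submat \<zeta> S \<pi> b \<in> A})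
          / (real (k choose t) * fact t * 2 ^ t) = 0)"

end

theory Submission
  imports Defs
begin

definition gmap :: "nat \<Rightarrow> real \<Rightarrow> real \<Rightarrow> (nat \<times> nat \<Rightarrow> real) \<Rightarrow> (nat \<times> nat \<Rightarrow> real)" where
  "gmap n a c M = restrict (\<lambda>(i, j). a * M (i, j) + c * (if i = j then 1 else 0)) ({..<n} \<times> {..<n})"

lemma gmap_meas: "gmap n a c \<in> measurable (mat_space n) (mat_space n)"
  unfolding gmap_def mat_space_def
  apply (rule measurable_restrict)
  apply (clarsimp split: prod.splits)
  apply measurable
  done

lemma perm_idx:
  assumes "S \<subseteq> {1..k}" "\<pi> \<in> perms_of S" "i < Suc (card S)"
  shows "(if i = 0 then 0 else \<pi> i) < Suc k"
proof (cases "i = 0")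
  case False
  then have "i \<in> {1..card S}" using assms(3) by auto
  then have "\<pi> i \<in> S" using assms(2) unfolding perms_of_def bij_betw_def by auto
  then show ?thesis using assms(1) False by auto
qed simp

lemma submat_meas:
  assumes "S \<subseteq> {1..k}" "\<pi> \<in> perms_of S"
  shows "(\<lambda>\<zeta>. submat \<zeta> S \<pi> b) \<in> measurable (mat_space (Suc k)) (mat_space (Suc (card S)))"
  unfolding submat_def mat_space_def
proof (rule measurable_restrict)
  fix p assume p: "p \<in> {..<Suc (card S)} \<times> {..<Suc (card S)}"
  obtain i j where pij: "p = (i, j)" by force
  have i: "(if i = 0 then 0 else \<pi> i) < Suc k" and j: "(if j = 0 then 0 else \<pi> j) < Suc k"
    using perm_idx[OF assms] p pij by auto
  have "(\<lambda>x. x (if i = 0 then 0 else \<pi> i, if j = 0 then 0 else \<pi> j)) \<in> borel_measurable (Pi\<^sub>M ({..<Suc k} \<times> {..<Suc k}) (\<lambda>_. borel))"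
    using i j by (intro measurable_component_singleton) auto
  then show "(\<lambda>x. case p of (i, j) \<Rightarrow> x (if i = 0 then 0 else \<pi> i, if j = 0 then 0 else \<pi> j) *
                 (if i = 0 then 1 else b i) * (if j = 0 then 1 else b j))
         \<in> borel_measurable (Pi\<^sub>M ({..<Suc k} \<times> {..<Suc k}) (\<lambda>_. borel))"
    unfolding pij case_prod_conv
    by (intro borel_measurable_times measurable_const) auto
qed

lemma submat_gmap:
  assumes "S \<subseteq> {1..k}" "\<pi> \<in> perms_of S" "b \<in> signs (card S)"
  shows "submat (gmap (Suc k) a c \<zeta>) S \<pi> b = gmap (Suc (card S)) a c (submat \<zeta> S \<pi> b)"
proof
  fix p :: "nat \<times> nat"
  obtain i j where pij: "p = (i, j)" by force
  show "submat (gmap (Suc k) a c \<zeta>) S \<pi> b p = gmap (Suc (card S)) a c (submat \<zeta> S \<pi> b) p"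
  proof (cases "i < Suc (card S) \<and> j < Suc (card S)")
    case False then show ?thesis unfolding pij submat_def gmap_def by auto
  next
    case True
    have i: "(if i = 0 then 0 else \<pi> i) < Suc k" and j: "(if j = 0 then 0 else \<pi> j) < Suc k"
      using perm_idx[OF assms(1,2)] True by auto
    have inj: "inj_on \<pi> {1..card S}" and img: "\<pi> ` {1..card S} = S"
      using assms(2) unfolding perms_of_def bij_betw_def by auto
    have S0: "0 \<notin> S" using assms(1) by auto
    have eq: "((if i = 0 then 0 else \<pi> i) = (if j = 0 then 0 else \<pi> j)) = (i = j)"
    proof (cases "i = 0")
      case i0: True
      show ?thesis
      proof (cases "j = 0")
        case False
        then have "j \<in> {1..card S}" using True by auto
        then have "\<pi> j \<in> S" using img by blast
        then have "\<pi> j \<noteq> 0" using S0 by (cases "\<pi> j") auto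
        then show ?thesis using i0 False by simp
      qed (simp add: i0)
    next
      case i0: False
      then have ii: "i \<in> {1..card S}" using True by auto
      then have "\<pi> i \<in> S" using img by blast
      then have pi0: "\<pi> i \<noteq> 0" using S0 by (cases "\<pi> i") auto
      show ?thesis
      proof (cases "j = 0")
        case False
        then have "j \<in> {1..card S}" using True by auto
        then show ?thesis using i0 False inj_on_eq_iff[OF inj ii] by simp
      qed (simp add: i0 pi0)
    qed
    have bsq: "(if i = 0 then 1 else b i) * (if i = 0 then 1 else b i) = (1::real)"
    proof (cases "i = 0")
      case False then have "i \<in> {1..card S}" using True by auto
      then have "b i \<in> {-1, 1}" using assms(3) unfolding signs_def by auto
      then show ?thesis using False by auto
    qed simp
    define i' where "i' = (if i = 0 then 0 else \<pi> i)"
    define j' where "j' = (if j = 0 then 0 else \<pi> j)"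
    define ci where "ci = (if i = 0 then 1 else b i)"
    define cj where "cj = (if j = 0 then 1 else b j)"
    have L: "submat (gmap (Suc k) a c \<zeta>) S \<pi> b (i, j) = gmap (Suc k) a c \<zeta> (i', j') * ci * cj"
      unfolding submat_def i'_def j'_def ci_def cj_def using True by simp
    have L2: "gmap (Suc k) a c \<zeta> (i', j') = a * \<zeta> (i', j') + c * (if i = j then 1 else 0)"
      unfolding gmap_def using i j eq unfolding i'_def j'_def by simp
    have R: "gmap (Suc (card S)) a c (submat \<zeta> S \<pi> b) (i, j) = a * (\<zeta> (i', j') * ci * cj) + c * (if i = j then 1 else 0)"
      unfolding gmap_def submat_def i'_def j'_def ci_def cj_def using True by simp
    have bsq': "i = j \<Longrightarrow> ci * cj = 1" using bsq unfolding ci_def cj_def by (simp only:)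
    show ?thesis unfolding pij L L2 R
      by (cases "i = j") (simp_all add: algebra_simps bsq')
  qed
qed

lemma transfer:
  assumes pr: "prob_on k \<Lambda> B"
    and maps: "\<And>\<zeta>. \<zeta> \<in> B \<Longrightarrow> gmap (Suc k) a c \<zeta> \<in> B'"
    and van: "vanishing k f \<Lambda>"
  shows "\<exists>\<Lambda>'. prob_on k \<Lambda>' B' \<and> vanishing k f \<Lambda>'"
proof -
  let ?M = "mat_space (Suc k)"
  let ?N = "restrict_space ?M B'"
  let ?g = "gmap (Suc k) a c"
  have ps: "prob_space \<Lambda>" and sl: "sets \<Lambda> = sets (restrict_space ?M B)"
    using pr unfolding prob_on_def by auto
  have spL: "space \<Lambda> = space (restrict_space ?M B)" using sets_eq_imp_space_eq[OF sl] .
  have g1: "?g \<in> measurable (restrict_space ?M B) ?M"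
    using gmap_meas by (rule measurable_restrict_space1)
  have gmeas: "?g \<in> measurable \<Lambda> ?N"
  proof (rule measurable_restrict_space2)
    show "?g \<in> space \<Lambda> \<rightarrow> B'" using maps spL by (auto simp: space_restrict_space)
    show "?g \<in> measurable \<Lambda> ?M" using g1 measurable_cong_sets[OF sl refl] by auto
  qed
  define \<Lambda>' where "\<Lambda>' = distr \<Lambda> ?N ?g"
  have "prob_on k \<Lambda>' B'"
    unfolding prob_on_def \<Lambda>'_def
    using prob_space.prob_space_distr[OF ps gmeas] by simp
  moreover have "vanishing k f \<Lambda>'"
    unfolding vanishing_def
  proof (intro ballI)
    fix t A assume t: "t \<in> {1..k}" and A: "A \<in> sets (mat_space (Suc t))"
    let ?h = "gmap (Suc t) a c"
    define A' where "A' = ?h -` A \<inter> space (mat_space (Suc t))"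
    have A': "A' \<in> sets (mat_space (Suc t))" unfolding A'_def
      using measurable_sets[OF gmap_meas A] .
    have key: "measure \<Lambda>' {\<zeta> \<in> space \<Lambda>'. submat \<zeta> S \<pi> b \<in> A}
        = measure \<Lambda> {\<zeta> \<in> space \<Lambda>. submat \<zeta> S \<pi> b \<in> A'}"
      if S: "S \<in> {S. S \<subseteq> {1..k} \<and> card S = t}" and \<pi>: "\<pi> \<in> perms_of S" and b: "b \<in> signs t" for S \<pi> b
    proof -
      have Sk: "S \<subseteq> {1..k}" and cS: "card S = t" using S by auto
      have sm: "(\<lambda>\<zeta>. submat \<zeta> S \<pi> b) \<in> measurable ?N (mat_space (Suc t))"
        using measurable_restrict_space1[OF submat_meas[OF Sk \<pi>]] cS by simp
      have spN: "space \<Lambda>' = space ?N" unfolding \<Lambda>'_def by simp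
      have X: "{\<zeta> \<in> space \<Lambda>'. submat \<zeta> S \<pi> b \<in> A} \<in> sets ?N"
        unfolding spN using measurable_sets[OF sm A]
        by (simp add: vimage_def Int_def conj_commute)
      have "measure \<Lambda>' {\<zeta> \<in> space \<Lambda>'. submat \<zeta> S \<pi> b \<in> A}
          = measure \<Lambda> (?g -` {\<zeta> \<in> space \<Lambda>'. submat \<zeta> S \<pi> b \<in> A} \<inter> space \<Lambda>)"
        unfolding \<Lambda>'_def using measure_distr[OF gmeas X[unfolded \<Lambda>'_def]] by simp
      also have "?g -` {\<zeta> \<in> space \<Lambda>'. submat \<zeta> S \<pi> b \<in> A} \<inter> space \<Lambda>
          = {\<zeta> \<in> space \<Lambda>. submat \<zeta> S \<pi> b \<in> A'}"
      proof -
        have gs: "?g \<zeta> \<in> space \<Lambda>'" if "\<zeta> \<in> space \<Lambda>" for \<zeta>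
          using measurable_space[OF gmeas that] spN by simp
        have sub: "submat \<zeta> S \<pi> b \<in> space (mat_space (Suc t))" for \<zeta>
          unfolding submat_def mat_space_def space_PiM cS by auto
        show ?thesis
          using gs sub submat_gmap[OF Sk \<pi> b[folded cS]] cS unfolding A'_def by auto
      qed
      finally show ?thesis .
    qed
    show "(\<Sum>S\<in>{S. S \<subseteq> {1..k} \<and> card S = t}. \<Sum>\<pi>\<in>perms_of S. \<Sum>b\<in>signs t.
            (\<Prod>i\<in>{1..t}. b i) * fhat k f S * measure \<Lambda>' {\<zeta> \<in> space \<Lambda>'. submat \<zeta> S \<pi> b \<in> A})
          / (real (k choose t) * fact t * 2 ^ t) = 0"
    proof -
      have "(\<Sum>S\<in>{S. S \<subseteq> {1..k} \<and> card S = t}. \<Sum>\<pi>\<in>perms_of S. \<Sum>b\<in>signs t.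
            (\<Prod>i\<in>{1..t}. b i) * fhat k f S * measure \<Lambda>' {\<zeta> \<in> space \<Lambda>'. submat \<zeta> S \<pi> b \<in> A})
          = (\<Sum>S\<in>{S. S \<subseteq> {1..k} \<and> card S = t}. \<Sum>\<pi>\<in>perms_of S. \<Sum>b\<in>signs t.
            (\<Prod>i\<in>{1..t}. b i) * fhat k f S * measure \<Lambda> {\<zeta> \<in> space \<Lambda>. submat \<zeta> S \<pi> b \<in> A'})"
        by (intro sum.cong refl) (simp add: key)
      then show ?thesis using van t A' unfolding vanishing_def by simp
    qed
  qed
  ultimately show ?thesis by blast
qed

theorem mainTheorem6:
  fixes k :: nat and f :: "(nat \<Rightarrow> real) \<Rightarrow> real" and \<delta> :: real
  assumes "\<forall>x\<in>cube k. f x \<in> {0, 1}"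
    and "0 < \<delta>" and "\<delta> < 1"
  shows "(\<exists>\<Lambda>. prob_on k \<Lambda> (Cdelta k f \<delta>) \<and> vanishing k f \<Lambda>)
     \<longleftrightarrow> (\<exists>\<Lambda>. prob_on k \<Lambda> (Cbody k f) \<and> vanishing k f \<Lambda>)"
proof
  have ar: "(1 / (1 - \<delta>)) * ((1 - \<delta>) * z + \<delta> * e) + (- \<delta> / (1 - \<delta>)) * e = z" for z e :: real
  proof -
    have nz: "1 - \<delta> \<noteq> 0" using assms(3) by simp
    have "(1 / (1 - \<delta>)) * ((1 - \<delta>) * z + \<delta> * e) = z + \<delta> * e / (1 - \<delta>)"
      using nz by (simp add: distrib_left)
    then show ?thesis by simp
  qed
  have ar2: "((1 - \<delta>) * z + \<delta>) / (1 - \<delta>) - \<delta> / (1 - \<delta>) = z" for z :: real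
  proof -
    have nz: "1 - \<delta> \<noteq> 0" using assms(3) by simp
    have "((1 - \<delta>) * z + \<delta>) / (1 - \<delta>) - \<delta> / (1 - \<delta>) = ((1 - \<delta>) * z + \<delta> - \<delta>) / (1 - \<delta>)"
      by (rule diff_divide_distrib[symmetric])
    also have "\<dots> = z" using nz by simp
    finally show ?thesis .
  qed
  have Cd: "Cdelta k f \<delta> = gmap (Suc k) (1 - \<delta>) \<delta> ` Cbody k f"
    unfolding Cdelta_def gmap_def by auto
  have ext: "\<zeta> \<in> extensional ({..<Suc k} \<times> {..<Suc k})" if "\<zeta> \<in> Cbody k f" for \<zeta>
    using that unfolding Cbody_def moment_matrix_def by auto
  have inv: "gmap (Suc k) (1 / (1 - \<delta>)) (- \<delta> / (1 - \<delta>)) (gmap (Suc k) (1 - \<delta>) \<delta> \<zeta>) = \<zeta>"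
    if "\<zeta> \<in> Cbody k f" for \<zeta>
  proof
    fix p :: "nat \<times> nat"
    show "gmap (Suc k) (1 / (1 - \<delta>)) (- \<delta> / (1 - \<delta>)) (gmap (Suc k) (1 - \<delta>) \<delta> \<zeta>) p = \<zeta> p"
      using ext[OF that] assms(3) unfolding gmap_def extensional_def
      by (cases p) (auto simp: ar ar2)
  qed
  show "\<exists>\<Lambda>. prob_on k \<Lambda> (Cbody k f) \<and> vanishing k f \<Lambda>"
    if "\<exists>\<Lambda>. prob_on k \<Lambda> (Cdelta k f \<delta>) \<and> vanishing k f \<Lambda>"
    using that inv unfolding Cd by (auto intro!: transfer[where a = "1 / (1 - \<delta>)" and c = "- \<delta> / (1 - \<delta>)"])
  show "\<exists>\<Lambda>. prob_on k \<Lambda> (Cdelta k f \<delta>) \<and> vanishing k f \<Lambda>"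
    if "\<exists>\<Lambda>. prob_on k \<Lambda> (Cbody k f) \<and> vanishing k f \<Lambda>"
    using that unfolding Cd by (auto intro!: transfer[where a = "1 - \<delta>" and c = \<delta>])
qed

end
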